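(* For all $w,v\in\mathbb{C}$: $S_n(w;v)/\sqrt{n}$ remains bounded as real $n\to\infty$ if and only if $w\notin\mathcal{Z}$. Also (for $w\neq0$) $T_n(w;v)/\sqrt{n}$ remains bounded as $n\to\infty$ if and only if $w\notin\mathcal{Y}$.
   Context: Principal logarithm branch (arguments in $(-\pi,\pi]$); $(nw)^{-(n+v)}=e^{-(n+v)\log n}e^{-(n+v)\log w}$. For real $n>0$ with $\mathrm{Re}(n+v)>-1$: $S_n(w;v)=1+nw\int_0^1 e^{nw(1-z)}z^{n+v}\,dz$ and, for $w\ne0$, $T_n(w;v)=e^{nw}(nw)^{-(n+v)}\Gamma(n+v+1)-S_n(w;v)$. Regions: $\mathcal{Y}=\{w:|we^{1-w}|<1,\ \mathrm{Re}(w)<1\}$ and $\mathcal{Z}=\{w:|we^{1-w}|<1,\ \mathrm{Re}(w)>1\}$. *)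

theory Defs
  imports "HOL-Analysis.Analysis"
begin

definition S_fun :: "real \<Rightarrow> complex \<Rightarrow> complex \<Rightarrow> complex" where
  "S_fun n w v = 1 + of_real n * w *
     integral {0..1} (\<lambda>z::real. exp (of_real n * w * (1 - of_real z)) * (of_real z) powr (of_real n + v))"

text \<open>(n w)^{-(n+v)} := e^{-(n+v) log n} e^{-(n+v) log w} (principal log).\<close>
definition nw_pow :: "real \<Rightarrow> complex \<Rightarrow> complex \<Rightarrow> complex" where
  "nw_pow n w v = exp (- (of_real n + v) * of_real (ln n)) * exp (- (of_real n + v) * Ln w)"

definition T_fun :: "real \<Rightarrow> complex \<Rightarrow> complex \<Rightarrow> complex" where
  "T_fun n w v = exp (of_real n * w) * nw_pow n w v * Gamma (of_real n + v + 1) - S_fun n w v"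

definition regionY :: "complex set" where
  "regionY = {w. cmod (w * exp (1 - w)) < 1 \<and> Re w < 1}"

definition regionZ :: "complex set" where
  "regionZ = {w. cmod (w * exp (1 - w)) < 1 \<and> Re w > 1}"

definition bounded_at_top :: "(real \<Rightarrow> complex) \<Rightarrow> bool" where
  "bounded_at_top f \<longleftrightarrow> (\<exists>C. \<forall>\<^sub>F n in at_top. cmod (f n) \<le> C)"

end

theory Submission
  imports Defs "HOL-Complex_Analysis.Complex_Analysis"
begin

lemma ln_lower_2x: fixes t :: real assumes "t \<ge> 0" shows "2*t/(2+t) \<le> ln (1+t)"
proof -
  define h where "h t = ln (1+t) - 2*t/(2+t)" for t :: real
  have d: "(h has_real_derivative (t^2/((1+t)*(2+t)^2))) (at t)" if "t \<ge> 0" for t :: real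
  proof -
    have "(h has_real_derivative (1/(1+t) - (2*(2+t) - 2*t)/(2+t)^2)) (at t)"
      unfolding h_def using that
      by (auto intro!: derivative_eq_intros simp: power2_eq_square field_simps)
    moreover have "1/(1+t) - (2*(2+t) - 2*t)/(2+t)^2 = t^2/((1+t)*(2+t)^2)"
      proof -
      have "(1+t) \<noteq> 0" "(2+t) \<noteq> 0" using that by auto
      then show ?thesis by (simp add: divide_simps power2_eq_square) algebra
    qed
    ultimately show ?thesis by simp
  qed
  have "h 0 \<le> h t"
  proof (rule DERIV_nonneg_imp_increasing_open[of 0 t h])
    show "0 \<le> t" by fact
  next
    fix x :: real assume "0 < x" "x < t"
    thus "\<exists>y. (h has_real_derivative y) (at x) \<and> 0 \<le> y"
      using d[of x] by (intro exI[of _ "x^2/((1+x)*(2+x)^2)"]) auto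
  qed (use assms d in \<open>auto intro!: DERIV_continuous continuous_at_imp_continuous_on\<close>)
  thus ?thesis by (simp add: h_def)
qed

lemma ln_1p_inv: fixes m :: real assumes "m > 0" shows "ln (1 + 1/m) = ln (m+1) - ln m"
proof -
  have "1 + 1/m = (m+1)/m" using assms by (simp add: field_simps)
  thus ?thesis using assms by (simp add: ln_div)
qed

definition LF :: "real \<Rightarrow> real" where
  "LF m = m - m * ln m + ln (Gamma (m + 1))"

lemma LF_step: assumes "m > 0"
  shows "LF (m + 1) = LF m + 1 - m * ln (1 + 1/m)"
proof -
  have e: "Gamma (m + 1 + 1) = (m + 1) * Gamma (m + 1)"
    using assms by (intro Gamma_plus1) (auto elim!: nonpos_Ints_cases)
  have p: "Gamma (m+1) > 0" "m + 1 > 0" using assms by auto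
  have g: "ln (Gamma (m+1+1)) = ln (m+1) + ln (Gamma (m+1))"
  proof -
    have q: "Gamma (m+1) \<noteq> 0" "m + 1 \<noteq> 0" using p(1) p(2) by (metis less_irrefl)+
    show ?thesis unfolding e ln_mult using q by simp
  qed
  show ?thesis unfolding LF_def g ln_1p_inv[OF assms] by (simp add: algebra_simps)
qed

lemma LF_mono: assumes "m > 0" shows "LF m \<le> LF (m + 1)"
proof -
  have "ln (1 + 1/m) \<le> 1/m" using assms by (intro ln_add_one_self_le_self) auto
  hence "m * ln (1 + 1/m) \<le> 1" using assms by (simp add: field_simps)
  thus ?thesis using LF_step[OF assms] by simp
qed

lemma LF_sqrt: assumes "m > 0" shows "LF (m + 1) - ln (m+1) / 2 \<le> LF m - ln m / 2"
proof -
  have L: "2*(1/m)/(2+1/m) \<le> ln (1 + 1/m)" using assms by (intro ln_lower_2x) auto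
  have e: "2*(1/m)/(2+1/m) = 2/(2*m+1)" using assms by (simp add: field_simps)
  have "ln (1 + 1/m) = ln (m+1) - ln m"
    using assms by (rule ln_1p_inv)
  moreover have "1 \<le> (m + 1/2) * ln (1 + 1/m)"
  proof -
    have "1 = (m + 1/2) * (2/(2*m+1))" using assms by (simp add: field_simps)
    also have "\<dots> \<le> (m + 1/2) * ln (1 + 1/m)" using L e assms by (intro mult_left_mono) auto
    finally show ?thesis .
  qed
  ultimately show ?thesis using LF_step[OF assms] by (simp add: algebra_simps)
qed

lemma LF_bounds: "\<exists>A B. \<forall>m\<ge>1. B \<le> LF m \<and> LF m - ln m / 2 \<le> A"
proof -
  have gp: "\<And>x::real. x > 0 \<Longrightarrow> Gamma x \<noteq> 0" by (metis Gamma_real_pos less_irrefl)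
  have cont: "continuous_on {1..2} LF"
    unfolding LF_def
    by (intro continuous_intros continuous_on_compose2[OF continuous_on_Gamma[of "{1<..}"]])
       (use gp in \<open>auto elim!: nonpos_Ints_cases\<close>)
  have cont2: "continuous_on {1..2} (\<lambda>m. LF m - ln m / 2)"
    by (intro continuous_intros cont) auto
  obtain x where "x \<in> {1..2}" "\<forall>y\<in>{1..2}. LF y - ln y / 2 \<le> LF x - ln x / 2"
    using continuous_attains_sup[OF compact_Icc _ cont2] by auto
  then obtain A where A: "\<And>y. y \<in> {1..2} \<Longrightarrow> LF y - ln y / 2 \<le> A" by blast
  obtain x' where "x' \<in> {1..2}" "\<forall>y\<in>{1..2}. LF x' \<le> LF y"
    using continuous_attains_inf[OF compact_Icc _ cont] by auto
  then obtain B where B: "\<And>y. y \<in> {1..2} \<Longrightarrow> B \<le> LF y" by blast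
  have ind: "B \<le> LF (m0 + real k) \<and> LF (m0 + real k) - ln (m0 + real k) / 2 \<le> A"
    if "m0 \<in> {1..2}" for k m0
  proof (induction k)
    case 0 then show ?case using A B that by simp
  next
    case (Suc k)
    have p: "m0 + real k > 0" using that by auto
    have e: "m0 + real (Suc k) = m0 + real k + 1" by simp
    show ?case unfolding e using LF_mono[OF p] LF_sqrt[OF p] Suc by linarith
  qed
  have "B \<le> LF m \<and> LF m - ln m / 2 \<le> A" if "m \<ge> 1" for m
  proof -
    define k where "k = nat (\<lfloor>m\<rfloor> - 1)"
    have "\<lfloor>m\<rfloor> \<ge> 1" using that by (simp add: le_floor_iff)
    hence "real k = of_int \<lfloor>m\<rfloor> - 1" by (simp add: k_def)
    hence "m - real k \<in> {1..2}" using that by (auto simp: floor_le_iff) linarith+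
    from ind[OF this, of k] show ?thesis by simp
  qed
  thus ?thesis by blast
qed

lemma H_bounds: fixes c :: real
  shows "\<exists>C D. D > 0 \<and> (\<forall>\<^sub>F n in at_top. exp n * n powr (-(n+c)) * Gamma (n+c+1) \<le> C * sqrt n
            \<and> D \<le> exp n * n powr (-(n+c)) * Gamma (n+c+1))"
proof -
  obtain A B where AB: "\<And>m. m \<ge> 1 \<Longrightarrow> B \<le> LF m \<and> LF m - ln m / 2 \<le> A"
    using LF_bounds by blast
  have key: "exp n * n powr (-(n+c)) * Gamma (n+c+1) \<le> (exp (A + c^2) * sqrt 2) * sqrt n
          \<and> exp B \<le> exp n * n powr (-(n+c)) * Gamma (n+c+1)"
    if n: "n \<ge> 1" "n \<ge> 1 - c" "n \<ge> c" for n :: real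
  proof -
    define m where "m = n + c"
    have m1: "m \<ge> 1" "m \<le> 2*n" using n by (auto simp: m_def)
    have gpos: "Gamma (m+1) > 0" using m1 by auto
    have H: "exp n * n powr (-(n+c)) * Gamma (n+c+1) = exp (LF m - c + m * (ln m - ln n))"
      using gpos n unfolding LF_def m_def[symmetric]
      by (simp add: powr_def exp_add exp_diff m_def algebra_simps exp_minus field_simps)
    have l1: "ln (n/m) \<le> n/m - 1" using n m1 by (intro ln_le_minus_one) auto
    have l2: "ln (m/n) \<le> m/n - 1" using n m1 by (intro ln_le_minus_one) auto
    have "ln (n/m) = ln n - ln m" "ln (m/n) = ln m - ln n" using n m1 by (simp_all add: ln_div)
    hence d1: "1 - n/m \<le> ln m - ln n" and d2: "ln m - ln n \<le> m/n - 1" using l1 l2 by linarith+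
    have "m * (1 - n/m) \<le> m * (ln m - ln n)" using d1 m1 by (intro mult_left_mono) auto
    moreover have "m * (1 - n/m) = m - n" using m1 by (simp add: field_simps)
    ultimately have lo: "m * (ln m - ln n) \<ge> m - n" by simp
    have hi: "m * (ln m - ln n) \<le> m * (m/n - 1)" using d2 m1 by (intro mult_left_mono) auto
    have "m * (m/n - 1) = c + c^2/n" using n by (simp add: m_def field_simps power2_eq_square)
    also have "\<dots> \<le> c + c^2"
    proof -
      have "c^2 * 1 \<le> c^2 * n" using n by (intro mult_left_mono) auto
      thus ?thesis using n by (simp add: field_simps)
    qed
    finally have hi': "m * (ln m - ln n) \<le> c + c^2" using hi by linarith
    have "exp (LF m - c + m * (ln m - ln n)) \<le> exp (A + ln m / 2 + c^2)"
      using AB[OF m1(1)] hi' by simp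
    also have "\<dots> = exp (A + c^2) * sqrt m"
      using m1 by (simp add: exp_add exp_ln_iff ln_sqrt[symmetric] algebra_simps)
    also have "\<dots> \<le> exp (A + c^2) * (sqrt 2 * sqrt n)"
      using m1 by (intro mult_left_mono) (auto simp: real_sqrt_mult[symmetric])
    finally have up: "exp (LF m - c + m * (ln m - ln n)) \<le> (exp (A + c^2) * sqrt 2) * sqrt n"
      by (simp add: algebra_simps)
    have "exp B \<le> exp (LF m - c + m * (ln m - ln n))"
      using AB[OF m1(1)] lo by (simp add: m_def)
    with up H show ?thesis by simp
  qed
  have "\<forall>\<^sub>F n in at_top. exp n * n powr (-(n+c)) * Gamma (n+c+1) \<le> (exp (A + c^2) * sqrt 2) * sqrt n
            \<and> exp B \<le> exp n * n powr (-(n+c)) * Gamma (n+c+1)"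
    using eventually_ge_at_top[of 1] eventually_ge_at_top[of "1-c"] eventually_ge_at_top[of c]
    by eventually_elim (use key in blast)
  thus ?thesis by (intro exI[of _ "exp (A + c^2) * sqrt 2"] exI[of _ "exp B"]) auto
qed

lemma sum_inv_sq_le: "(\<Sum>k\<in>{0..N}. 1 / (real k + 1)^2) \<le> 2 - 1 / (real N + 1)"
proof (induction N)
  case 0 then show ?case by simp
next
  case (Suc N)
  have "(\<Sum>k\<in>{0..Suc N}. 1 / (real k + 1)^2) = (\<Sum>k\<in>{0..N}. 1 / (real k + 1)^2) + 1/(real N + 2)^2"
    by (simp add: add.commute)
  also have "\<dots> \<le> 2 - 1/(real N + 1) + 1/(real N + 2)^2" using Suc by simp
  also have "\<dots> \<le> 2 - 1/(real (Suc N) + 1)"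
  proof -
    have e: "1/(real N + 1) - 1/(real N + 2) = 1/((real N + 1) * (real N + 2))"
      by (simp add: field_simps)
    have "1/(real N + 2)^2 \<le> 1/((real N + 1) * (real N + 2))"
      unfolding power2_eq_square by (intro divide_left_mono mult_mono) auto
    hence "1/(real N + 2)^2 \<le> 1/(real N + 1) - 1/(real N + 2)" using e by simp
    thus ?thesis by (simp add: add.commute)
  qed
  finally show ?case .
qed

lemma Gamma_series_norm_bounds:
  fixes s :: complex and N :: nat
  assumes x: "Re s \<ge> 1"
  shows "norm (Gamma_series s N) \<le> norm (Gamma_series (complex_of_real (Re s)) N)"
    and "exp (- ((Im s)^2)) * norm (Gamma_series (complex_of_real (Re s)) N) \<le> norm (Gamma_series s N)"
proof -
  define x y where "x = Re s" and "y = Im s"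
  have s: "s = Complex x y" by (simp add: x_def y_def)
  have nk: "norm (s + of_nat k) = sqrt ((x + k)^2 + y^2)" for k
    by (simp add: s cmod_def)
  have P1: "pochhammer s (N+1) = (\<Prod>k\<in>{0..N}. s + of_nat k)"
    by (simp add: pochhammer_Suc_prod)
  have P2: "pochhammer (complex_of_real x) (N+1) = (\<Prod>k\<in>{0..N}. complex_of_real (x + k))"
    by (simp add: pochhammer_Suc_prod)
  have np1: "norm (pochhammer s (N+1)) = (\<Prod>k\<in>{0..N}. sqrt ((x + k)^2 + y^2))"
    unfolding P1 prod_norm[symmetric] nk ..
  have np2': "norm (pochhammer (complex_of_real x) (N+1)) = (\<Prod>k\<in>{0..N}. \<bar>x + k\<bar>)"
    by (simp only: P2 prod_norm[symmetric] norm_of_real)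
  have np2: "norm (pochhammer (complex_of_real x) (N+1)) = (\<Prod>k\<in>{0..N}. (x + k))"
    unfolding np2' using x by (intro prod.cong) (auto simp: x_def)
  have ne: "norm (exp (s * of_real (ln (of_nat N)))) = norm (exp (complex_of_real x * of_real (ln (of_nat N))))"
    by (simp add: s)
  define E where "E = norm (exp (complex_of_real x * of_real (ln (of_nat N))))"
  have GS1: "norm (Gamma_series s N) = fact N * E / (\<Prod>k\<in>{0..N}. sqrt ((x + k)^2 + y^2))"
    unfolding Gamma_series_def norm_divide norm_mult np1 ne E_def by (simp add: norm_fact)
  have GS2: "norm (Gamma_series (complex_of_real x) N) = fact N * E / (\<Prod>k\<in>{0..N}. (x + k))"
    unfolding Gamma_series_def norm_divide norm_mult np2 E_def by (simp add: norm_fact)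
  have pos: "(\<Prod>k\<in>{0..N}. (x + k)) > 0" using x by (intro prod_pos) (auto simp: x_def)
  have le1: "(\<Prod>k\<in>{0..N}. (x + k)) \<le> (\<Prod>k\<in>{0..N}. sqrt ((x + k)^2 + y^2))"
    using x by (intro prod_mono) (auto simp: x_def intro!: real_le_rsqrt)
  have le2: "(\<Prod>k\<in>{0..N}. sqrt ((x + k)^2 + y^2)) \<le> (\<Prod>k\<in>{0..N}. (x + k) * exp (y^2 / (2*(x+k)^2)))"
  proof (intro prod_mono conjI)
    fix k assume "k \<in> {0..N}"
    have xk: "x + k \<ge> 1" using x by (simp add: x_def)
    have "(x + k)^2 + y^2 = (x+k)^2 * (1 + y^2/(x+k)^2)" using xk by (simp add: field_simps)
    also have "\<dots> \<le> (x+k)^2 * exp (y^2/(x+k)^2)"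
      by (intro mult_left_mono) (auto simp: add.commute exp_ge_add_one_self)
    also have "\<dots> = ((x + k) * exp (y^2 / (2*(x+k)^2)))^2"
      by (simp add: power_mult_distrib exp_double[symmetric] power2_eq_square[of "exp _"]
             exp_add[symmetric])
    finally show "sqrt ((x + k)^2 + y^2) \<le> (x + k) * exp (y^2 / (2*(x+k)^2))"
      using xk by (intro real_le_lsqrt) auto
  qed auto
  have eqP: "(\<Prod>k\<in>{0..N}. (x + k) * exp (y^2 / (2*(x+k)^2)))
         = (\<Prod>k\<in>{0..N}. (x + k)) * exp (\<Sum>k\<in>{0..N}. y^2 / (2*(x+k)^2))"
    by (simp add: prod.distrib exp_sum)
  have "(\<Sum>k\<in>{0..N}. y^2 / (2*(x+k)^2)) \<le> (\<Sum>k\<in>{0..N}. y^2 / 2 * (1 / (real k + 1)^2))"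
  proof (intro sum_mono)
    fix k assume "k \<in> {0..N}"
    have xk: "x + k \<ge> real k + 1" using x by (simp add: x_def)
    have "1 / (x+k)^2 \<le> 1 / (real k + 1)^2"
      using xk by (intro divide_left_mono power_mono) auto
    hence "y^2/2 * (1/(x+k)^2) \<le> y^2/2 * (1 / (real k + 1)^2)" by (intro mult_left_mono) auto
    thus "y^2 / (2*(x+k)^2) \<le> y^2 / 2 * (1 / (real k + 1)^2)" by simp
  qed
  also have "\<dots> = y^2/2 * (\<Sum>k\<in>{0..N}. 1 / (real k + 1)^2)" by (simp add: sum_distrib_left)
  also have "\<dots> \<le> y^2/2 * 2"
  proof (intro mult_left_mono)
    have "1 / (real N + 1) \<ge> 0" by simp
    thus "(\<Sum>k\<in>{0..N}. 1 / (real k + 1)^2) \<le> 2" using sum_inv_sq_le[of N] by linarith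
  qed auto
  finally have sb: "(\<Sum>k\<in>{0..N}. y^2 / (2*(x+k)^2)) \<le> y^2" by simp
  have le3: "(\<Prod>k\<in>{0..N}. sqrt ((x + k)^2 + y^2)) \<le> (\<Prod>k\<in>{0..N}. (x + k)) * exp (y^2)"
    using le2 unfolding eqP
    by (rule order_trans) (use pos sb in \<open>auto intro!: mult_left_mono\<close>)
  have FE: "fact N * E \<ge> 0" by (simp add: E_def)
  show "norm (Gamma_series s N) \<le> norm (Gamma_series (complex_of_real (Re s)) N)"
    unfolding x_def[symmetric] GS1 GS2 using FE le1 pos
    by (intro divide_left_mono) auto
  have "exp (- (y^2)) * (fact N * E / (\<Prod>k\<in>{0..N}. (x + k))) = fact N * E / ((\<Prod>k\<in>{0..N}. (x + k)) * exp (y^2))"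
    by (simp add: exp_minus field_simps)
  also have "\<dots> \<le> fact N * E / (\<Prod>k\<in>{0..N}. sqrt ((x + k)^2 + y^2))"
    using FE le3 le1 pos by (intro divide_left_mono) auto
  finally show "exp (- ((Im s)^2)) * norm (Gamma_series (complex_of_real (Re s)) N) \<le> norm (Gamma_series s N)"
    unfolding x_def[symmetric] y_def[symmetric] GS1 GS2 by simp
qed

lemma Gamma_norm_bounds:
  fixes s :: complex assumes "Re s \<ge> 1"
  shows "norm (Gamma s) \<le> Gamma (Re s)" and "exp (- ((Im s)^2)) * Gamma (Re s) \<le> norm (Gamma s)"
proof -
  have L1: "(\<lambda>N. norm (Gamma_series s N)) \<longlonglongrightarrow> norm (Gamma s)"
    by (intro tendsto_intros)
  have L2: "(\<lambda>N. norm (Gamma_series (complex_of_real (Re s)) N)) \<longlonglongrightarrow> Gamma (Re s)"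
  proof -
    have "(\<lambda>N. norm (Gamma_series (complex_of_real (Re s)) N)) \<longlonglongrightarrow> norm (Gamma (complex_of_real (Re s)))"
      by (intro tendsto_intros)
    moreover have "norm (Gamma (complex_of_real (Re s))) = Gamma (Re s)"
      using assms by (simp add: Gamma_complex_of_real)
    ultimately show ?thesis by simp
  qed
  show "norm (Gamma s) \<le> Gamma (Re s)"
    by (rule tendsto_le[OF _ L2 L1]) (use Gamma_series_norm_bounds(1)[OF assms] in auto)
  show "exp (- ((Im s)^2)) * Gamma (Re s) \<le> norm (Gamma s)"
    by (rule tendsto_le[OF _ L1 tendsto_mult_left[OF L2]]) (use Gamma_series_norm_bounds(2)[OF assms] in auto)
qed

lemma trunc_lim:
  fixes g :: "real \<Rightarrow> complex"
  assumes g: "g absolutely_integrable_on {0..}" and L: "filterlim L at_top sequentially"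
  shows "(\<lambda>k. integral {0..L k} g) \<longlonglongrightarrow> integral {0..} g"
proof -
  define f where "f k x = (if x \<in> {..L k} then g x else 0)" for k x
  have gi: "g integrable_on {0..}" using g by (simp add: absolutely_integrable_on_def)
  have hi: "(\<lambda>x. norm (g x)) integrable_on {0..}" using g by (simp add: absolutely_integrable_on_def)
  have eqs: "{..L k} \<inter> {0..} = {0..L k}" for k by auto
  have fi: "f k integrable_on {0..}" for k
  proof -
    have "g integrable_on {0..L k}" by (rule integrable_on_subinterval[OF gi]) auto
    hence "g integrable_on ({..L k} \<inter> {0..})" by (simp add: eqs)
    thus ?thesis unfolding f_def integrable_on_def has_integral_restrict_Int[symmetric] .
  qed
  have fe: "integral {0..} (f k) = integral {0..L k} g" for k
    unfolding f_def integral_restrict_Int eqs ..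
  have conv: "(\<lambda>k. f k x) \<longlonglongrightarrow> g x" if "x \<in> {0..}" for x
  proof -
    have "eventually (\<lambda>k. L k \<ge> x) sequentially" using L by (auto simp: filterlim_at_top)
    hence "eventually (\<lambda>k. g x = f k x) sequentially" by eventually_elim (auto simp: f_def)
    thus ?thesis by (rule Lim_transform_eventually[OF tendsto_const])
  qed
  have "(\<lambda>k. integral {0..} (f k)) \<longlonglongrightarrow> integral {0..} g"
    by (rule dominated_convergence(2)[OF fi hi _ conv]) (auto simp: f_def)
  thus ?thesis unfolding fe .
qed

lemma ray_contour:
  fixes f :: "complex \<Rightarrow> complex"
  assumes "L > 0"
  shows "(f has_contour_integral I) (linepath 0 (of_real L * p)) \<longleftrightarrow>
           ((\<lambda>t. f (of_real t * p) * p) has_integral I) {0..L}"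
proof -
  have "((\<lambda>t. f (of_real t * p) * p) has_integral I) (cbox 0 L) \<longleftrightarrow>
          ((\<lambda>x. f (of_real (L * x) * p) * p) has_integral I /\<^sub>R L) {0..1}"
    using has_integral_affinity_iff[of L "\<lambda>t. f (of_real t * p) * p" 0 I 0 L, OF assms]
    using assms by simp
  also have "\<dots> \<longleftrightarrow> ((\<lambda>x. L *\<^sub>R (f (of_real (L * x) * p) * p)) has_integral L *\<^sub>R (I /\<^sub>R L)) {0..1}"
    using assms by (subst has_integral_cmul_iff) auto
  also have "\<dots> \<longleftrightarrow> ((\<lambda>x. f (linepath 0 (of_real L * p) x) * (of_real L * p - 0)) has_integral I) {0..1}"
    using assms by (intro arg_cong2[where f="\<lambda>a b. (a has_integral b) {0..1}"])
       (auto simp: linepath_def scaleR_conv_of_real fun_eq_iff algebra_simps)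
  also have "\<dots> \<longleftrightarrow> (f has_contour_integral I) (linepath 0 (of_real L * p))"
    by (simp add: has_contour_integral_linepath)
  finally show ?thesis by simp
qed

lemma powr_exp_0: fixes c b :: real assumes c: "c > 0"
  shows "((\<lambda>x::real. x powr b * exp(-(c*x))) \<longlongrightarrow> 0) at_top"
proof -
  have "((\<lambda>x. b * (ln x / x)) \<longlongrightarrow> b * 0) at_top"
    by (intro tendsto_intros ln_x_over_x_tendsto_0)
  hence ev: "eventually (\<lambda>x. b * (ln x / x) < c/2) at_top" using c by (intro order_tendstoD) auto
  have lim: "((\<lambda>x. exp (- (c/2) * x)) \<longlongrightarrow> 0) at_top"
    using c by (intro filterlim_compose[OF exp_at_bot] filterlim_tendsto_neg_mult_at_bot[OF tendsto_const]
         filterlim_ident) auto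
  show ?thesis
  proof (rule Lim_null_comparison[OF _ lim])
    show "eventually (\<lambda>x. norm (x powr b * exp (-(c*x))) \<le> exp (- (c/2) * x)) at_top"
      using ev eventually_gt_at_top[of 0]
    proof eventually_elim
      case (elim x)
      have "b * ln x < c/2 * x" using elim by (simp add: field_simps)
      hence "b * ln x - c * x \<le> - (c/2) * x" by simp
      hence "exp (b * ln x - c * x) \<le> exp (- (c/2) * x)" by simp
      moreover have "norm (x powr b * exp (-(c*x))) = exp (b * ln x - c * x)"
        using elim by (simp add: powr_def exp_diff exp_minus field_simps)
      ultimately show ?case by simp
    qed
  qed
qed

lemma majorant_int:
  fixes b c :: real assumes b: "b \<ge> 0" and c: "c > 0"
  shows "(\<lambda>t::real. t powr b * exp (-(c*t))) integrable_on {0..}"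
proof -
  have "(\<lambda>t. complex_of_real t powr (of_real (b+1) - 1) / of_real (exp (c * t))) absolutely_integrable_on {0<..}"
    using b c by (intro absolutely_integrable_Gamma_integral) auto
  hence "(\<lambda>t. norm (complex_of_real t powr (of_real (b+1) - 1) / of_real (exp (c * t)))) integrable_on {0<..}"
    by (simp add: absolutely_integrable_on_def)
  hence "(\<lambda>t::real. t powr b * exp (-(c*t))) integrable_on {0<..}"
    by (rule integrable_eq) (auto simp: norm_divide norm_powr_real_powr exp_minus field_simps)
  hence "(\<lambda>t::real. t powr b * exp (-(c*t))) integrable_on (insert 0 {0<..})"
    by (simp add: integrable_on_insert_iff)
  moreover have "insert 0 {0<..} = {0::real..}" by auto
  ultimately show ?thesis by simp
qed

lemma absint_g:
  fixes p a :: complex assumes p: "Re p > 0" and a: "Re a > 0"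
  shows "(\<lambda>t::real. exp (- (of_real t * p)) * of_real t powr a) absolutely_integrable_on {0..}"
proof (rule measurable_bounded_by_integrable_imp_absolutely_integrable)
  show "(\<lambda>t::real. exp (- (of_real t * p)) * of_real t powr a) \<in> borel_measurable (lebesgue_on {0..})"
    using a by (intro continuous_imp_measurable_on_sets_lebesgue continuous_intros) auto
  show "{0::real..} \<in> sets lebesgue" by simp
  show "(\<lambda>t::real. t powr (Re a) * exp (-(Re p*t))) integrable_on {0..}"
    using a p by (intro majorant_int) auto
  fix t :: real assume t: "t \<in> {0..}"
  have "norm (exp (- (of_real t * p)) * of_real t powr a) = exp (-(Re p * t)) * (t powr Re a * exp (- Im a * Arg (of_real t)))"
    using t by (simp add: norm_mult norm_powr_complex)
  also have "Arg (of_real t) = 0" using t by (simp add: Arg_of_real)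
  finally show "norm (exp (- (of_real t * p)) * of_real t powr a) \<le> t powr (Re a) * exp (-(Re p*t))"
    using t by (simp add: mult_ac)
qed

lemma gamma_rotate:
  fixes p a :: complex assumes p: "Re p > 0" and a: "Re a > 0"
  shows "((\<lambda>t::real. exp (- (of_real t * p)) * of_real t powr a) has_integral p powr (-(a+1)) * Gamma (a+1)) {0..}"
proof -
  define f where "f u = exp (-u) * u powr a" for u :: complex
  define g where "g t = exp (- (of_real t * p)) * of_real t powr a" for t :: real
  have p0: "p \<noteq> 0" using p by auto
  have a0: "a \<noteq> 0" using a by auto
  have gabs: "g absolutely_integrable_on {0..}" unfolding g_def using p a by (rule absint_g)
  have fabs: "(\<lambda>t. f (of_real t)) absolutely_integrable_on {0..}"
    using absint_g[of 1 a] a by (simp add: f_def)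
  have G: "((\<lambda>t. f (of_real t)) has_integral Gamma (a+1)) {0..}"
  proof -
    have "((\<lambda>t. of_real t powr (a + 1 - 1) / of_real (exp t)) has_integral Gamma (a+1)) {0..}"
      using a by (intro Gamma_integral_complex) auto
    thus ?thesis by (rule has_integral_eq[rotated]) (simp add: f_def exp_minus field_simps exp_of_real)
  qed
  have cont: "continuous_on {u. Re u \<ge> 0} f"
    unfolding f_def using a by (intro continuous_intros) auto
  have fg: "f (of_real t * p) * p = g t * (p powr a * p)" if "t \<ge> 0" for t
  proof -
    have "(of_real t * p) powr a = of_real t powr a * p powr a"
      using that by (intro powr_times_real_left) auto
    thus ?thesis by (simp add: f_def g_def)
  qed
  define c2 where "c2 k = contour_integral (linepath (of_real (real k * Re p)) (of_real (real k) * p)) f" for k :: nat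
  have key: "integral {0..real k} g * (p powr a * p) = integral {0..real k * Re p} (\<lambda>t. f (of_real t)) + c2 k"
    if k: "k \<ge> 1" for k :: nat
  proof -
    define R where "R = real k * Re p"
    define q where "q = of_real (real k) * p"
    have R: "R > 0" using k p by (simp add: R_def)
    have Req: "Re q = R" by (simp add: q_def R_def)
    have hull: "convex hull {0, of_real R, q} \<subseteq> {u. Re u \<ge> 0}"
      by (intro hull_minimal) (use R Req in \<open>auto simp: convex_halfspace_Re_ge\<close>)
    have seg: "closed_segment x y \<subseteq> {u. Re u \<ge> 0}" if "Re x \<ge> 0" "Re y \<ge> 0" for x y
      by (rule closed_segment_subset) (use that in \<open>auto simp: convex_halfspace_Re_ge\<close>)
    have ci: "f contour_integrable_on linepath x y" if "Re x \<ge> 0" "Re y \<ge> 0" for x y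
      by (rule contour_integrable_continuous_linepath, rule continuous_on_subset[OF cont seg[OF that]])
    have cauchy: "(f has_contour_integral 0) (linepath 0 (of_real R) +++ linepath (of_real R) q +++ linepath q 0)"
    proof (rule Cauchy_theorem_triangle_cofinite[where S="{0}"])
      show "continuous_on (convex hull {0, of_real R, q}) f" by (rule continuous_on_subset[OF cont hull])
      fix x assume x: "x \<in> interior (convex hull {0, of_real R, q}) - {0}"
      hence "Re x \<ge> 0" "x \<noteq> 0" using hull interior_subset by blast+
      hence "x \<notin> \<real>\<^sub>\<le>\<^sub>0" by (auto simp: complex_nonpos_Reals_iff complex_eq_iff)
      hence d: "((\<lambda>u. u powr a) has_field_derivative (a * x powr (a-1))) (at x)"
        by (rule has_field_derivative_powr)
      have "((\<lambda>u. exp (-u)) has_field_derivative (exp (-x) * (-1))) (at x)"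
        by (auto intro!: derivative_eq_intros)
      from DERIV_mult[OF this d] show "f field_differentiable at x"
        unfolding f_def field_differentiable_def by blast
    qed auto
    define c1 c3 where "c1 = contour_integral (linepath 0 (of_real R)) f"
      and "c3 = contour_integral (linepath q 0) f"
    have h1: "(f has_contour_integral c1) (linepath 0 (of_real R))" unfolding c1_def
      by (rule has_contour_integral_integral, rule ci) (use R in auto)
    have h2: "(f has_contour_integral c2 k) (linepath (of_real R) q)" unfolding c2_def R_def[symmetric] q_def[symmetric]
      by (rule has_contour_integral_integral, rule ci) (use R Req in auto)
    have h3: "(f has_contour_integral c3) (linepath q 0)" unfolding c3_def
      by (rule has_contour_integral_integral, rule ci) (use R Req in auto)
    have "(f has_contour_integral (c1 + (c2 k + c3))) (linepath 0 (of_real R) +++ linepath (of_real R) q +++ linepath q 0)"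
      by (intro has_contour_integral_join h1 h2 h3 valid_path_join valid_path_linepath) auto
    hence sum0: "c1 + (c2 k + c3) = 0" using cauchy has_contour_integral_unique by blast
    have "c3 = - contour_integral (linepath 0 q) f" unfolding c3_def
      by (rule contour_integral_reverse_linepath, rule continuous_on_subset[OF cont seg]) (use Req R in auto)
    moreover have "contour_integral (linepath 0 q) f = integral {0..real k} g * (p powr a * p)"
    proof -
      have "(f has_contour_integral contour_integral (linepath 0 q) f) (linepath 0 (of_real (real k) * p))"
        unfolding q_def[symmetric] by (rule has_contour_integral_integral, rule ci) (use R Req in auto)
      hence "((\<lambda>t. f (of_real t * p) * p) has_integral contour_integral (linepath 0 q) f) {0..real k}"
        using k by (subst (asm) ray_contour) auto
      hence "((\<lambda>t. g t * (p powr a * p)) has_integral contour_integral (linepath 0 q) f) {0..real k}"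
        by (rule has_integral_eq[rotated]) (simp add: fg)
      moreover have "((\<lambda>t. g t * (p powr a * p)) has_integral integral {0..real k} g * (p powr a * p)) {0..real k}"
        by (intro has_integral_mult_left integrable_integral integrable_on_subinterval[OF
              set_lebesgue_integral_eq_integral(1)[OF gabs] ]) auto
      ultimately show ?thesis using has_integral_unique by blast
    qed
    moreover have "c1 = integral {0..R} (\<lambda>t. f (of_real t))"
    proof -
      have "(f has_contour_integral c1) (linepath 0 (of_real R * 1))" using h1 by simp
      hence "((\<lambda>t. f (of_real t * 1) * 1) has_integral c1) {0..R}" using R by (subst (asm) ray_contour) auto
      thus ?thesis by (simp add: integral_unique)
    qed
    ultimately show ?thesis using sum0 unfolding R_def by (simp add: algebra_simps)
  qed
  define C where "C = exp (\<bar>Im a\<bar> * pi) * (cmod p powr Re a) * (2 * cmod p)"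
  have c2b: "norm (c2 k) \<le> C * (real k powr (Re a + 1) * exp (-(Re p * real k)))" if k: "k \<ge> 1" for k :: nat
  proof -
    define R where "R = real k * Re p"
    define q where "q = of_real (real k) * p"
    define M where "M = real k * cmod p"
    have R: "R > 0" using k p by (simp add: R_def)
    have Req: "Re q = R" by (simp add: q_def R_def)
    have RM: "R \<le> M" unfolding R_def M_def using k by (intro mult_left_mono complex_Re_le_cmod) auto
    have nq: "norm q = M" by (simp add: q_def M_def norm_mult)
    let ?S = "{u. Re u \<ge> R} \<inter> cball 0 M"
    have seg: "closed_segment (of_real R) q \<subseteq> ?S"
      by (rule closed_segment_subset) (use R RM Req nq in \<open>auto intro!: convex_Int convex_halfspace_Re_ge\<close>)
    define B where "B = exp (-R) * (M powr Re a * exp (\<bar>Im a\<bar> * pi))"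
    have fb: "norm (f u) \<le> B" if u: "u \<in> closed_segment (of_real R) q" for u
    proof -
      from seg u have u1: "Re u \<ge> R" "norm u \<le> M" by auto
      have "norm (f u) = exp (- Re u) * (norm u powr Re a * exp (- Im a * Arg u))"
        by (simp add: f_def norm_mult norm_powr_complex)
      also have "\<dots> \<le> exp (-R) * (M powr Re a * exp (\<bar>Im a\<bar> * pi))"
      proof (intro mult_mono powr_mono2)
        have "\<bar>Arg u\<bar> \<le> pi" using Arg_le_pi[of u] mpi_less_Arg[of u] by linarith
        hence "\<bar>Im a * Arg u\<bar> \<le> \<bar>Im a\<bar> * pi" by (simp add: abs_mult mult_left_mono)
        thus "exp (- Im a * Arg u) \<le> exp (\<bar>Im a\<bar> * pi)" by simp
      qed (use u1 a in auto)
      finally show ?thesis by (simp add: B_def)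
    qed
    have "norm (c2 k) \<le> B * norm (q - of_real R)"
      unfolding c2_def R_def[symmetric] q_def[symmetric]
    proof (rule contour_integral_bound_linepath[OF _ _ fb])
      show "f contour_integrable_on linepath (complex_of_real R) q"
        by (rule contour_integrable_continuous_linepath, rule continuous_on_subset[OF cont])
           (use seg R in force)
    qed (auto simp: B_def)
    also have "\<dots> \<le> B * (2 * M)"
    proof (intro mult_left_mono)
      have "norm (q - of_real R) \<le> norm q + norm (of_real R :: complex)" by (rule norm_triangle_ineq4)
      thus "norm (q - of_real R) \<le> 2 * M" using nq RM R by simp
    qed (simp add: B_def)
    also have "B * (2 * M) = C * (real k powr (Re a + 1) * exp (-(Re p * real k)))"
    proof -
      have "M powr Re a = real k powr Re a * cmod p powr Re a" unfolding M_def by (rule powr_mult)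
      moreover have "real k powr (Re a + 1) = real k powr Re a * real k" using k by (simp add: powr_add)
      ultimately show ?thesis by (simp add: B_def C_def M_def R_def mult_ac)
    qed
    finally show ?thesis .
  qed
  have L3: "c2 \<longlonglongrightarrow> 0"
  proof (rule Lim_null_comparison)
    show "eventually (\<lambda>k. norm (c2 k) \<le> C * (real k powr (Re a + 1) * exp (-(Re p * real k)))) sequentially"
      using eventually_ge_at_top[of 1] by eventually_elim (rule c2b)
    have "((\<lambda>x. x powr (Re a + 1) * exp (-(Re p * x))) \<longlongrightarrow> 0) at_top" using p by (rule powr_exp_0)
    hence "(\<lambda>k. real k powr (Re a + 1) * exp (-(Re p * real k))) \<longlonglongrightarrow> 0"
      by (rule filterlim_compose) (rule filterlim_real_sequentially)
    thus "(\<lambda>k. C * (real k powr (Re a + 1) * exp (-(Re p * real k)))) \<longlonglongrightarrow> 0"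
      by (rule tendsto_mult_right_zero)
  qed
  have L1: "(\<lambda>k. integral {0..real k} g) \<longlonglongrightarrow> integral {0..} g"
    by (rule trunc_lim[OF gabs filterlim_real_sequentially])
  have L2: "(\<lambda>k. integral {0..real k * Re p} (\<lambda>t. f (of_real t))) \<longlonglongrightarrow> Gamma (a+1)"
  proof -
    have "filterlim (\<lambda>k. real k * Re p) at_top sequentially"
      using filterlim_tendsto_pos_mult_at_top[OF tendsto_const p filterlim_real_sequentially]
      by (simp add: mult.commute)
    from trunc_lim[OF fabs this] show ?thesis using G by (simp add: integral_unique)
  qed
  have lim1: "(\<lambda>k. integral {0..real k} g * (p powr a * p)) \<longlonglongrightarrow> Gamma (a+1)"
  proof -
    have "(\<lambda>k. integral {0..real k * Re p} (\<lambda>t. f (of_real t)) + c2 k) \<longlonglongrightarrow> Gamma (a+1) + 0"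
      by (intro tendsto_add L2 L3)
    moreover have "eventually (\<lambda>k. integral {0..real k * Re p} (\<lambda>t. f (of_real t)) + c2 k = integral {0..real k} g * (p powr a * p)) sequentially"
      using eventually_ge_at_top[of 1] by eventually_elim (rule key[symmetric])
    ultimately show ?thesis by (simp add: tendsto_cong)
  qed
  have lim2: "(\<lambda>k. integral {0..real k} g * (p powr a * p)) \<longlonglongrightarrow> integral {0..} g * (p powr a * p)"
    by (intro tendsto_intros L1)
  have eq: "integral {0..} g * (p powr a * p) = Gamma (a+1)" using LIMSEQ_unique[OF lim2 lim1] .
  have pp: "p powr a * p = p powr (a+1)" using p0 by (simp add: powr_add)
  have pn: "p powr (-(a+1)) * p powr (a+1) = 1" using p0 by (simp add: powr_def exp_add[symmetric] algebra_simps)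
  have "integral {0..} g = integral {0..} g * (p powr (a+1) * p powr (-(a+1)))"
    using pn by (simp add: mult.commute)
  also have "\<dots> = (integral {0..} g * (p powr a * p)) * p powr (-(a+1))"
    unfolding pp by (simp only: mult.assoc)
  also have "\<dots> = p powr (-(a+1)) * Gamma (a+1)" unfolding eq by (simp only: mult.commute)
  finally have "integral {0..} g = p powr (-(a+1)) * Gamma (a+1)" .
  moreover have "g integrable_on {0..}" using gabs by (simp add: absolutely_integrable_on_def)
  ultimately show ?thesis unfolding g_def[symmetric] by (metis has_integral_integral)
qed

lemma h_int: fixes n m :: real assumes n: "n > 0" and m: "m > 0"
  shows "((\<lambda>t. exp (n*(1-t)) * t powr m) has_integral (exp n * n powr (-(m+1)) * Gamma (m+1))) {0..}"
proof -
  have c: "((\<lambda>t::real. exp (- (of_real t * of_real n)) * of_real t powr of_real m) has_integral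
            (of_real n) powr (-(of_real m + 1)) * Gamma (of_real m + 1 :: complex)) {0..}"
    using n m by (intro gamma_rotate) auto
  have v: "(of_real n :: complex) powr (-(of_real m + 1)) * Gamma (of_real m + 1) = of_real (n powr (-(m+1)) * Gamma (m+1))"
  proof -
    have "(of_real n :: complex) powr (-(of_real m + 1)) = of_real n powr (of_real (-(m+1)))" by simp
    also have "\<dots> = of_real (n powr (-(m+1)))" using n by (intro powr_of_real) auto
    finally have 1: "(of_real n :: complex) powr (-(of_real m + 1)) = of_real (n powr (-(m+1)))" .
    have "Gamma (of_real m + 1 :: complex) = Gamma (of_real (m + 1))" by simp
    also have "\<dots> = of_real (Gamma (m+1))" by (rule Gamma_complex_of_real)
    finally show ?thesis using 1 by simp
  qed
  have "((\<lambda>t::real. complex_of_real (exp (- (t * n)) * t powr m)) has_integral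
            of_real (n powr (-(m+1)) * Gamma (m+1))) {0..}"
    using c unfolding v by (rule has_integral_eq[rotated]) (auto simp: powr_of_real exp_of_real simp flip: of_real_mult of_real_minus)
  from has_integral_linear[OF this bounded_linear_Re]
  have "((\<lambda>t::real. exp (- (t * n)) * t powr m) has_integral (n powr (-(m+1)) * Gamma (m+1))) {0..}"
    by (simp add: o_def)
  from has_integral_mult_right[OF this, of "exp n"]
  have "((\<lambda>t::real. exp n * (exp (- (t * n)) * t powr m)) has_integral exp n * (n powr (-(m+1)) * Gamma (m+1))) {0..}" .
  moreover have "exp n * (exp (- (t * n)) * t powr m) = exp (n*(1-t)) * t powr m" for t
    by (simp add: exp_add[symmetric] algebra_simps)
  ultimately show ?thesis by (simp add: mult.assoc)
qed

lemma n_powr_shift: fixes n m :: real assumes "n > 0" shows "n * n powr (-(m+1)) = n powr (-m)"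
proof -
  have "n powr (-m) = n powr (1 + (-(m+1)))" by simp
  also have "\<dots> = n powr 1 * n powr (-(m+1))" by (rule powr_add)
  finally show ?thesis using assms by simp
qed

lemma normF:
  fixes n t :: real and w v :: complex assumes "t \<ge> 0"
  shows "norm (exp (of_real n * w * (1 - of_real t)) * of_real t powr (of_real n + v))
         = exp (n * Re w * (1 - t)) * t powr (n + Re v)"
proof -
  have "of_real n * w * (1 - of_real t) = of_real (n * (1 - t)) * w" by (simp add: algebra_simps)
  hence "Re (of_real n * w * (1 - of_real t)) = n * Re w * (1 - t)" by simp
  moreover have "norm (of_real t powr (of_real n + v)) = t powr (n + Re v)"
    using assms by (subst norm_powr_real_powr) auto
  ultimately show ?thesis by (simp add: norm_mult)
qed

lemma contF:
  fixes n :: real and w v :: complex assumes "n + Re v > 0"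
  shows "continuous_on {0..} (\<lambda>t::real. exp (of_real n * w * (1 - of_real t)) * of_real t powr (of_real n + v))"
  using assms by (intro continuous_intros) auto

lemma S_bound:
  fixes n :: real and w v :: complex
  assumes n: "n > 0" and m: "n + Re v > 0" and w: "Re w \<le> 1"
  shows "norm (S_fun n w v) \<le> 1 + cmod w * (exp n * n powr (-(n + Re v)) * Gamma (n + Re v + 1))"
proof -
  define m where "m = n + Re v"
  define F where "F t = exp (of_real n * w * (1 - of_real t)) * of_real t powr (of_real n + v)" for t :: real
  define h where "h t = exp (n*(1-t)) * t powr m" for t :: real
  have mp: "m > 0" using m by (simp add: m_def)
  have Fint: "F integrable_on {0..1}" unfolding F_def
    by (rule integrable_continuous_interval, rule continuous_on_subset[OF contF[OF m]]) auto
  have hI: "(h has_integral exp n * n powr (-(m+1)) * Gamma (m+1)) {0..}"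
    unfolding h_def using n mp by (rule h_int)
  have hint: "h integrable_on {0..1}"
    by (rule integrable_on_subinterval[OF has_integral_integrable[OF hI]]) auto
  have le: "norm (F t) \<le> h t" if "t \<in> {0..1}" for t
  proof -
    have "n * Re w * (1 - t) \<le> n * (1 - t)" using that n w by (intro mult_right_mono) auto
    thus ?thesis using that unfolding F_def h_def m_def by (subst normF) (auto intro!: mult_right_mono)
  qed
  have "norm (integral {0..1} F) \<le> integral {0..1} h"
    by (rule integral_norm_bound_integral[OF Fint hint le])
  also have "\<dots> \<le> integral {0..} h"
    by (rule integral_subset_le) (use hint hI in \<open>auto simp: h_def\<close>)
  also have "\<dots> = exp n * n powr (-(m+1)) * Gamma (m+1)" using hI by (simp add: integral_unique)
  finally have I: "norm (integral {0..1} F) \<le> exp n * n powr (-(m+1)) * Gamma (m+1)" .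
  have "S_fun n w v = 1 + of_real n * w * integral {0..1} F" unfolding S_fun_def F_def[abs_def] ..
  hence "norm (S_fun n w v) \<le> 1 + n * cmod w * norm (integral {0..1} F)"
    using n by (auto intro!: order_trans[OF norm_triangle_ineq] simp: norm_mult)
  also have "\<dots> \<le> 1 + n * cmod w * (exp n * n powr (-(m+1)) * Gamma (m+1))"
    using I n by (auto intro!: mult_left_mono)
  also have "n * cmod w * (exp n * n powr (-(m+1)) * Gamma (m+1)) = cmod w * (exp n * (n * n powr (-(m+1))) * Gamma (m+1))"
    by (simp add: mult_ac)
  also have "n * n powr (-(m+1)) = n powr (-m)" using n by (rule n_powr_shift)
  finally show ?thesis by (simp add: m_def add_ac)
qed

lemma T_bound:
  fixes n :: real and w v :: complex
  assumes n: "n > 0" and m: "n + Re v > 0" and w: "Re w \<ge> 1"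
  shows "norm (T_fun n w v) \<le> 1 + cmod w * (exp n * n powr (-(n + Re v)) * Gamma (n + Re v + 1))"
proof -
  define m where "m = n + Re v"
  define a where "a = of_real n + v"
  define p where "p = of_real n * w"
  define F where "F t = exp (of_real n * w * (1 - of_real t)) * of_real t powr (of_real n + v)" for t :: real
  define g where "g t = exp (- (of_real t * p)) * of_real t powr a" for t :: real
  define h where "h t = exp (n*(1-t)) * t powr m" for t :: real
  have mp: "m > 0" using m by (simp add: m_def)
  have Rea: "Re a = m" by (simp add: a_def m_def)
  have Rep: "Re p > 0" using n w by (simp add: p_def)
  have w0: "w \<noteq> 0" using w by auto
  have p0: "p \<noteq> 0" using n w0 by (simp add: p_def)
  have Fg: "F t = exp p * g t" for t
    by (simp add: F_def g_def p_def a_def exp_add[symmetric] algebra_simps)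
  have gI: "(g has_integral p powr (-(a+1)) * Gamma (a+1)) {0..}"
    unfolding g_def using Rep mp Rea by (intro gamma_rotate) auto
  have FI: "(F has_integral exp p * (p powr (-(a+1)) * Gamma (a+1))) {0..}"
    unfolding Fg by (rule has_integral_mult_right[OF gI])
  have gabs: "g absolutely_integrable_on {0..}" unfolding g_def using Rep mp Rea by (intro absint_g) auto
  have Feq: "F = (\<lambda>t. exp p * g t)" using Fg by auto
  have Fabs: "F absolutely_integrable_on {0..}" unfolding Feq
    using gabs by (intro set_integrable_mult_right)
  have F1: "F integrable_on {1..}"
  proof -
    have "F absolutely_integrable_on {1..}"
      by (rule set_integrable_subset[OF Fabs]) auto
    thus ?thesis by (simp add: absolutely_integrable_on_def)
  qed
  have F01: "F integrable_on {0..1}"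
    by (rule integrable_on_subinterval[OF has_integral_integrable[OF FI]]) auto
  have "(F has_integral (integral {0..1} F + integral {1..} F)) ({0..1} \<union> {1..})"
    by (intro has_integral_Un integrable_integral F01 F1) (auto intro: negligible_subset[OF negligible_sing[of 1]])
  moreover have "{0..1} \<union> {1..} = {0::real..}" by auto
  ultimately have sum: "integral {0..1} F + integral {1..} F = exp p * (p powr (-(a+1)) * Gamma (a+1))"
    using FI has_integral_unique by metis
  have nwp: "nw_pow n w v = p powr (-a)"
  proof -
    have "Ln p = of_real (ln n) + Ln w" unfolding p_def using Ln_times_of_real[OF n w0] n by (simp add: Ln_of_real)
    thus ?thesis using p0 by (simp add: nw_pow_def powr_def a_def exp_add[symmetric] algebra_simps)
  qed
  have pp: "p * p powr (-(a+1)) = p powr (-a)"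
  proof -
    have "p powr (-a) = p powr (1 + (-(a+1)))" by simp
    also have "\<dots> = p powr 1 * p powr (-(a+1))" by (rule powr_add)
    finally show ?thesis by simp
  qed
  have G: "exp (of_real n * w) * nw_pow n w v * Gamma (of_real n + v + 1) = p * (exp p * (p powr (-(a+1)) * Gamma (a+1)))"
    unfolding nwp pp[symmetric] by (simp add: p_def a_def mult_ac)
  have Teq: "T_fun n w v = p * integral {1..} F - 1"
  proof -
    have "S_fun n w v = 1 + p * integral {0..1} F" unfolding S_fun_def F_def[abs_def] p_def ..
    thus ?thesis unfolding T_fun_def G sum[symmetric] by (simp add: algebra_simps)
  qed
  have hI: "(h has_integral exp n * n powr (-(m+1)) * Gamma (m+1)) {0..}"
    unfolding h_def using n mp by (rule h_int)
  have habs: "h absolutely_integrable_on {0..}"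
    by (rule nonnegative_absolutely_integrable_1[OF has_integral_integrable[OF hI]]) (auto simp: h_def)
  have h1: "h integrable_on {1..}"
  proof -
    have "h absolutely_integrable_on {1..}"
      by (rule set_integrable_subset[OF habs]) auto
    thus ?thesis by (simp add: absolutely_integrable_on_def)
  qed
  have le: "norm (F t) \<le> h t" if "t \<in> {1..}" for t
  proof -
    have "(1 - t) * Re w \<le> (1 - t) * 1" using that w by (intro mult_left_mono_neg) auto
    hence "n * Re w * (1 - t) \<le> n * (1 - t)" using n by (simp add: mult_left_mono mult_ac)
    thus ?thesis using that unfolding F_def h_def m_def by (subst normF) (auto intro!: mult_right_mono)
  qed
  have "norm (integral {1..} F) \<le> integral {1..} h"
    by (rule integral_norm_bound_integral[OF F1 h1 le])
  also have "\<dots> \<le> integral {0..} h"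
    by (rule integral_subset_le) (use h1 hI in \<open>auto simp: h_def\<close>)
  also have "\<dots> = exp n * n powr (-(m+1)) * Gamma (m+1)" using hI by (simp add: integral_unique)
  finally have I: "norm (integral {1..} F) \<le> exp n * n powr (-(m+1)) * Gamma (m+1)" .
  have "norm (T_fun n w v) \<le> 1 + n * cmod w * norm (integral {1..} F)"
    unfolding Teq using n by (auto intro!: order_trans[OF norm_triangle_ineq4] simp: norm_mult p_def)
  also have "\<dots> \<le> 1 + n * cmod w * (exp n * n powr (-(m+1)) * Gamma (m+1))"
    using I n by (auto intro!: mult_left_mono)
  also have "n * cmod w * (exp n * n powr (-(m+1)) * Gamma (m+1)) = cmod w * (exp n * (n * n powr (-(m+1))) * Gamma (m+1))"
    by (simp add: mult_ac)
  also have "n * n powr (-(m+1)) = n powr (-m)" using n by (rule n_powr_shift)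
  finally show ?thesis by (simp add: m_def add_ac)
qed
lemma G_norm:
  fixes n :: real and w v :: complex
  assumes n: "n > 0" and w0: "w \<noteq> 0"
  shows "norm (exp (of_real n * w) * nw_pow n w v * Gamma (of_real n + v + 1)) =
     exp (n * (Re w - 1 - ln (cmod w))) * exp (Im v * Arg w - Re v * ln (cmod w)) *
     (exp n * n powr (-(n + Re v)) * norm (Gamma (of_real n + v + 1)))"
proof -
  have ReLn: "Re (Ln w) = ln (cmod w)" "Im (Ln w) = Arg w" using w0 by (simp_all add: Arg_eq_Im_Ln)
  have e1: "norm (exp (of_real n * w)) = exp (n * Re w)" by simp
  have e2: "norm (exp (- (of_real n + v) * of_real (ln n))) = exp (-(n + Re v) * ln n)" by simp
  have e3: "norm (exp (- (of_real n + v) * Ln w)) = exp (-(n + Re v) * ln (cmod w) + Im v * Arg w)"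
    using ReLn by (simp add: algebra_simps)
  have e4: "n powr (-(n + Re v)) = exp (-(n + Re v) * ln n)" using n by (simp add: powr_def)
  have "norm (exp (of_real n * w) * nw_pow n w v * Gamma (of_real n + v + 1)) =
        exp (n * Re w) * (exp (-(n + Re v) * ln n) * exp (-(n + Re v) * ln (cmod w) + Im v * Arg w))
          * norm (Gamma (of_real n + v + 1))"
    unfolding nw_pow_def norm_mult e1 e2 e3 ..
  also have "\<dots> = exp (n * Re w + (-(n + Re v) * ln n) + (-(n + Re v) * ln (cmod w) + Im v * Arg w))
          * norm (Gamma (of_real n + v + 1))"
    by (simp add: exp_add)
  also have "n * Re w + (-(n + Re v) * ln n) + (-(n + Re v) * ln (cmod w) + Im v * Arg w) =
             n * (Re w - 1 - ln (cmod w)) + (Im v * Arg w - Re v * ln (cmod w)) + (n + (-(n + Re v) * ln n))"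
    by (simp add: algebra_simps)
  finally show ?thesis unfolding e4 by (simp add: exp_add mult_ac)
qed

lemma Q_bounds:
  fixes n :: real and v :: complex
  assumes n: "n > 0" and m: "n + Re v \<ge> 0"
  shows "exp n * n powr (-(n + Re v)) * norm (Gamma (of_real n + v + 1)) \<le> exp n * n powr (-(n + Re v)) * Gamma (n + Re v + 1)"
    and "exp (- ((Im v)^2)) * (exp n * n powr (-(n + Re v)) * Gamma (n + Re v + 1)) \<le> exp n * n powr (-(n + Re v)) * norm (Gamma (of_real n + v + 1))"
proof -
  have s: "Re (of_real n + v + 1) \<ge> 1" "Re (of_real n + v + 1) = n + Re v + 1" "Im (of_real n + v + 1) = Im v"
    using m by auto
  have pos: "exp n * n powr (-(n + Re v)) \<ge> 0" by simp
  show "exp n * n powr (-(n + Re v)) * norm (Gamma (of_real n + v + 1)) \<le> exp n * n powr (-(n + Re v)) * Gamma (n + Re v + 1)"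
    using Gamma_norm_bounds(1)[OF s(1)] unfolding s(2,3) by (intro mult_left_mono pos)
  have "exp (- ((Im v)^2)) * Gamma (n + Re v + 1) \<le> norm (Gamma (of_real n + v + 1))"
    using Gamma_norm_bounds(2)[OF s(1)] unfolding s(2,3) .
  from mult_left_mono[OF this pos]
  show "exp (- ((Im v)^2)) * (exp n * n powr (-(n + Re v)) * Gamma (n + Re v + 1)) \<le> exp n * n powr (-(n + Re v)) * norm (Gamma (of_real n + v + 1))"
    by (simp add: mult_ac)
qed

lemma growth:
  fixes L A B :: real assumes L: "L > 0"
  shows "\<not> (\<forall>\<^sub>F n in at_top. exp (n * L) \<le> A * sqrt n + B)"
proof
  assume "\<forall>\<^sub>F n in at_top. exp (n * L) \<le> A * sqrt n + B"
  then obtain N where N: "\<And>n. n \<ge> N \<Longrightarrow> exp (n * L) \<le> A * sqrt n + B"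
    by (auto simp: eventually_at_top_linorder)
  define X where "X = 4 * (\<bar>A\<bar> + \<bar>B\<bar>) / L^2"
  have X0: "X \<ge> 0" by (simp add: X_def)
  define n where "n = max N (max 1 (X + 1))"
  have "n \<ge> 1" "n \<ge> N" "n > X" unfolding n_def using X0 by linarith+
  hence n1: "n \<ge> 1" "n \<ge> N" "n > 4 * (\<bar>A\<bar> + \<bar>B\<bar>) / L^2" by (simp_all add: X_def)
  have "A * sqrt n + B \<le> \<bar>A\<bar> * n + \<bar>B\<bar> * n"
  proof -
    have s1: "sqrt n \<ge> 1" using n1 by simp
    have "sqrt n * 1 \<le> sqrt n * sqrt n" using s1 by (intro mult_left_mono) auto
    hence sn: "sqrt n \<le> n" using n1 by simp
    have "A * sqrt n \<le> \<bar>A\<bar> * sqrt n" using n1 by (intro mult_right_mono) auto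
    also have "\<dots> \<le> \<bar>A\<bar> * n" using sn by (intro mult_left_mono) auto
    finally have "A * sqrt n \<le> \<bar>A\<bar> * n" .
    moreover have "B \<le> \<bar>B\<bar> * n"
    proof -
      have "\<bar>B\<bar> * 1 \<le> \<bar>B\<bar> * n" using n1 by (intro mult_left_mono) auto
      thus ?thesis by simp
    qed
    ultimately show ?thesis by linarith
  qed
  also have "\<dots> = (\<bar>A\<bar> + \<bar>B\<bar>) * n" by (simp add: algebra_simps)
  also have "\<dots> < (n * L)^2 / 4"
  proof -
    have "4 * (\<bar>A\<bar> + \<bar>B\<bar>) < n * L^2" using n1(3) L by (simp add: field_simps)
    hence "4 * (\<bar>A\<bar> + \<bar>B\<bar>) * n < n * L^2 * n" using n1 by (intro mult_strict_right_mono) auto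
    thus ?thesis by (simp add: power2_eq_square field_simps)
  qed
  also have "\<dots> \<le> (1 + n * L / 2)^2"
    using n1 L by (simp add: power2_eq_square field_simps)
  also have "\<dots> \<le> (exp (n * L / 2))^2"
    using n1 L by (intro power_mono) (auto simp: exp_ge_add_one_self)
  also have "\<dots> = exp (n * L)" by (simp add: exp_double[symmetric] power2_eq_square exp_add[symmetric])
  finally show False using N[OF n1(2)] by simp
qed

lemma bnd_intro:
  fixes f :: "real \<Rightarrow> complex"
  assumes "\<forall>\<^sub>F n in at_top. norm (f n) \<le> A * sqrt n + B"
  shows "bounded_at_top (\<lambda>n. f n / of_real (sqrt n))"
proof -
  have "\<forall>\<^sub>F n in at_top. norm (f n / of_real (sqrt n)) \<le> \<bar>A\<bar> + \<bar>B\<bar>"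
    using assms eventually_ge_at_top[of 1]
  proof eventually_elim
    case (elim n)
    have s: "sqrt n \<ge> 1" using elim by simp
    have "norm (f n / of_real (sqrt n)) = norm (f n) / sqrt n" using s by (simp add: norm_divide)
    also have "\<dots> \<le> (A * sqrt n + B) / sqrt n" using elim s by (intro divide_right_mono) auto
    also have "\<dots> = A + B / sqrt n" using s by (simp add: field_simps)
    also have "\<dots> \<le> \<bar>A\<bar> + \<bar>B\<bar>"
    proof -
      have "B / sqrt n \<le> \<bar>B\<bar> / sqrt n" using s by (intro divide_right_mono) auto
      also have "\<dots> \<le> \<bar>B\<bar> / 1" using s by (intro divide_left_mono) auto
      finally show ?thesis by simp
    qed
    finally show ?case .
  qed
  thus ?thesis unfolding bounded_at_top_def by blast
qed

lemma bnd_elim: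
  fixes f :: "real \<Rightarrow> complex"
  assumes "bounded_at_top (\<lambda>n. f n / of_real (sqrt n))"
  obtains C where "\<forall>\<^sub>F n in at_top. norm (f n) \<le> C * sqrt n + 0"
proof -
  from assms obtain C where C: "\<forall>\<^sub>F n in at_top. norm (f n / of_real (sqrt n)) \<le> C"
    unfolding bounded_at_top_def by blast
  have "\<forall>\<^sub>F n in at_top. norm (f n) \<le> C * sqrt n + 0"
    using C eventually_gt_at_top[of 0]
  proof eventually_elim
    case (elim n)
    hence "norm (f n) / sqrt n \<le> C" by (simp add: norm_divide)
    thus ?case using elim by (simp add: field_simps)
  qed
  thus ?thesis by (rule that)
qed

lemma r_L:
  fixes w :: complex assumes "w \<noteq> 0"
  shows "cmod (w * exp (1 - w)) < 1 \<longleftrightarrow> Re w - 1 - ln (cmod w) > 0"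
proof -
  have "cmod (w * exp (1 - w)) = cmod w * exp (1 - Re w)" by (simp only: norm_mult norm_exp_eq_Re) simp
  also have "\<dots> = exp (ln (cmod w)) * exp (1 - Re w)" using assms by simp
  also have "\<dots> = exp (-(Re w - 1 - ln (cmod w)))" by (simp add: exp_add[symmetric])
  finally have "cmod (w * exp (1 - w)) = exp (-(Re w - 1 - ln (cmod w)))" .
  thus ?thesis by simp
qed

theorem corollary5p6:
  fixes w v :: complex
  shows "(bounded_at_top (\<lambda>n. S_fun n w v / of_real (sqrt n)) \<longleftrightarrow> w \<notin> regionZ)
       \<and> (w \<noteq> 0 \<longrightarrow> (bounded_at_top (\<lambda>n. T_fun n w v / of_real (sqrt n)) \<longleftrightarrow> w \<notin> regionY))"
proof -
  define H where "H n = exp n * n powr (-(n + Re v)) * Gamma (n + Re v + 1)" for n :: real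
  define G where "G n = exp (of_real n * w) * nw_pow n w v * Gamma (of_real n + v + 1)" for n :: real
  define L where "L = Re w - 1 - ln (cmod w)"
  define K where "K = exp (Im v * Arg w - Re v * ln (cmod w))"
  have TG: "T_fun n w v = G n - S_fun n w v" for n by (simp add: T_fun_def G_def)
  obtain C0 D0 where D0: "D0 > 0" and evH: "\<forall>\<^sub>F n in at_top. H n \<le> C0 * sqrt n \<and> D0 \<le> H n"
    using H_bounds[of "Re v"] unfolding H_def by (auto simp: add_ac)
  have "\<exists>n. (H n \<le> C0 * sqrt n \<and> D0 \<le> H n) \<and> n \<ge> 1"
    using eventually_happens[OF eventually_conj[OF evH eventually_ge_at_top[of 1]]] by auto
  then obtain n0 where n0: "H n0 \<le> C0 * sqrt n0" "D0 \<le> H n0" "n0 \<ge> 1" by blast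
  have C0: "C0 > 0"
  proof (rule ccontr)
    assume "\<not> C0 > 0"
    hence "C0 * sqrt n0 \<le> 0" using n0 by (intro mult_nonpos_nonneg) auto
    thus False using n0 D0 by linarith
  qed
  have evbase: "\<forall>\<^sub>F n in at_top. n \<ge> 1 \<and> n + Re v > 0"
    using eventually_ge_at_top[of 1] eventually_gt_at_top[of "- Re v"] by eventually_elim auto
  have Sb: "\<forall>\<^sub>F n in at_top. norm (S_fun n w v) \<le> (cmod w * C0) * sqrt n + 1" if w: "Re w \<le> 1"
    using evbase evH
  proof eventually_elim
    case (elim n)
    have "norm (S_fun n w v) \<le> 1 + cmod w * H n" unfolding H_def using elim w by (intro S_bound) auto
    also have "\<dots> \<le> 1 + cmod w * (C0 * sqrt n)" using elim by (intro add_left_mono mult_left_mono) auto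
    finally show ?case by (simp add: mult_ac)
  qed
  have Tb: "\<forall>\<^sub>F n in at_top. norm (T_fun n w v) \<le> (cmod w * C0) * sqrt n + 1" if w: "Re w \<ge> 1"
    using evbase evH
  proof eventually_elim
    case (elim n)
    have "norm (T_fun n w v) \<le> 1 + cmod w * H n" unfolding H_def using elim w by (intro T_bound) auto
    also have "\<dots> \<le> 1 + cmod w * (C0 * sqrt n)" using elim by (intro add_left_mono mult_left_mono) auto
    finally show ?case by (simp add: mult_ac)
  qed
  have Gb: "\<forall>\<^sub>F n in at_top. norm (G n) \<le> exp (n * L) * K * (C0 * sqrt n)
              \<and> exp (n * L) * (K * exp (- ((Im v)^2)) * D0) \<le> norm (G n)" if w0: "w \<noteq> 0"
    using evbase evH
  proof eventually_elim
    case (elim n)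
    define Q where "Q = exp n * n powr (-(n + Re v)) * norm (Gamma (of_real n + v + 1))"
    have GQ: "norm (G n) = exp (n * L) * K * Q"
      unfolding G_def Q_def L_def K_def using elim w0 by (subst G_norm) (auto simp: mult_ac)
    have Q1: "Q \<le> H n" and Q2: "exp (- ((Im v)^2)) * H n \<le> Q"
      unfolding Q_def H_def using Q_bounds[of n v] elim by auto
    have EK: "exp (n * L) * K \<ge> 0" by (simp add: K_def)
    have "norm (G n) \<le> exp (n * L) * K * (C0 * sqrt n)"
      unfolding GQ using Q1 elim EK by (intro mult_left_mono) auto
    moreover have "exp (n * L) * (K * exp (- ((Im v)^2)) * D0) \<le> norm (G n)"
    proof -
      have "exp (- ((Im v)^2)) * D0 \<le> Q" using Q2 elim
        by (meson exp_gt_zero less_imp_le mult_left_mono order_trans)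
      from mult_left_mono[OF this EK] show ?thesis unfolding GQ by (simp add: mult_ac)
    qed
    ultimately show ?case ..
  qed
  have contra: False if w0: "w \<noteq> 0" and Lp: "L > 0" and
      up: "\<forall>\<^sub>F n in at_top. norm (G n) \<le> A * sqrt n + B" for A B
  proof -
    define \<kappa> where "\<kappa> = K * exp (- ((Im v)^2)) * D0"
    have kp: "\<kappa> > 0" using D0 by (simp add: \<kappa>_def K_def)
    have "\<forall>\<^sub>F n in at_top. exp (n * L) \<le> (A / \<kappa>) * sqrt n + B / \<kappa>"
      using up Gb[OF w0]
    proof eventually_elim
      case (elim n)
      hence "exp (n * L) * \<kappa> \<le> A * sqrt n + B" unfolding \<kappa>_def by linarith
      thus ?case using kp by (simp add: field_simps)
    qed
    thus False using growth[OF Lp] by blast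
  qed
  have Lnonpos: "\<forall>\<^sub>F n in at_top. norm (G n) \<le> (K * C0) * sqrt n + 0" if w0: "w \<noteq> 0" and L: "L \<le> 0"
    using Gb[OF w0] evbase
  proof eventually_elim
    case (elim n)
    have "exp (n * L) \<le> 1" using L elim by (simp add: mult_nonneg_nonpos)
    hence "exp (n * L) * (K * (C0 * sqrt n)) \<le> 1 * (K * (C0 * sqrt n))"
      using elim C0 by (intro mult_right_mono) (auto simp: K_def intro!: mult_nonneg_nonneg)
    thus ?case using elim by (simp add: mult_ac)
  qed
  have GST: "G n = S_fun n w v + T_fun n w v" for n using TG[of n] by simp
  have P1: "bounded_at_top (\<lambda>n. S_fun n w v / of_real (sqrt n)) \<longleftrightarrow> w \<notin> regionZ"
  proof
    assume B: "bounded_at_top (\<lambda>n. S_fun n w v / of_real (sqrt n))"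
    show "w \<notin> regionZ"
    proof
      assume "w \<in> regionZ"
      hence Rw: "Re w > 1" and r: "cmod (w * exp (1 - w)) < 1" by (auto simp: regionZ_def)
      have w0: "w \<noteq> 0" using Rw by auto
      have Lp: "L > 0" using r r_L[OF w0] by (simp add: L_def)
      obtain C where C: "\<forall>\<^sub>F n in at_top. norm (S_fun n w v) \<le> C * sqrt n + 0" using bnd_elim[OF B] .
      have "\<forall>\<^sub>F n in at_top. norm (G n) \<le> (C + cmod w * C0) * sqrt n + 1"
        using C Tb[OF less_imp_le[OF Rw]]
      proof eventually_elim
        case (elim n)
        have "norm (G n) \<le> norm (S_fun n w v) + norm (T_fun n w v)" unfolding GST by (rule norm_triangle_ineq)
        thus ?case using elim by (simp add: algebra_simps)
      qed
      thus False using contra[OF w0 Lp] by blast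
    qed
  next
    assume nZ: "w \<notin> regionZ"
    show "bounded_at_top (\<lambda>n. S_fun n w v / of_real (sqrt n))"
    proof (cases "Re w \<le> 1")
      case True
      from Sb[OF True] show ?thesis by (rule bnd_intro)
    next
      case False
      hence Rw: "Re w > 1" by simp
      have w0: "w \<noteq> 0" using Rw by auto
      have "\<not> cmod (w * exp (1 - w)) < 1" using nZ Rw by (auto simp: regionZ_def)
      hence L: "L \<le> 0" using r_L[OF w0] by (simp add: L_def)
      have "\<forall>\<^sub>F n in at_top. norm (S_fun n w v) \<le> (K * C0 + cmod w * C0) * sqrt n + 1"
        using Lnonpos[OF w0 L] Tb[OF less_imp_le[OF Rw]]
      proof eventually_elim
        case (elim n)
        have "S_fun n w v = G n - T_fun n w v" using GST[of n] by simp
        hence "norm (S_fun n w v) \<le> norm (G n) + norm (T_fun n w v)" by (simp add: norm_triangle_ineq4)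
        thus ?case using elim by (simp add: algebra_simps)
      qed
      thus ?thesis by (rule bnd_intro)
    qed
  qed
  have P2: "bounded_at_top (\<lambda>n. T_fun n w v / of_real (sqrt n)) \<longleftrightarrow> w \<notin> regionY" if w0: "w \<noteq> 0"
  proof
    assume B: "bounded_at_top (\<lambda>n. T_fun n w v / of_real (sqrt n))"
    show "w \<notin> regionY"
    proof
      assume "w \<in> regionY"
      hence Rw: "Re w < 1" and r: "cmod (w * exp (1 - w)) < 1" by (auto simp: regionY_def)
      have Lp: "L > 0" using r r_L[OF w0] by (simp add: L_def)
      obtain C where C: "\<forall>\<^sub>F n in at_top. norm (T_fun n w v) \<le> C * sqrt n + 0" using bnd_elim[OF B] .
      have "\<forall>\<^sub>F n in at_top. norm (G n) \<le> (C + cmod w * C0) * sqrt n + 1"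
        using C Sb[OF less_imp_le[OF Rw]]
      proof eventually_elim
        case (elim n)
        have "norm (G n) \<le> norm (S_fun n w v) + norm (T_fun n w v)" unfolding GST by (rule norm_triangle_ineq)
        thus ?case using elim by (simp add: algebra_simps)
      qed
      thus False using contra[OF w0 Lp] by blast
    qed
  next
    assume nY: "w \<notin> regionY"
    show "bounded_at_top (\<lambda>n. T_fun n w v / of_real (sqrt n))"
    proof (cases "Re w \<ge> 1")
      case True
      from Tb[OF True] show ?thesis by (rule bnd_intro)
    next
      case False
      hence Rw: "Re w < 1" by simp
      have "\<not> cmod (w * exp (1 - w)) < 1" using nY Rw by (auto simp: regionY_def)
      hence L: "L \<le> 0" using r_L[OF w0] by (simp add: L_def)
      have "\<forall>\<^sub>F n in at_top. norm (T_fun n w v) \<le> (K * C0 + cmod w * C0) * sqrt n + 1"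
        using Lnonpos[OF w0 L] Sb[OF less_imp_le[OF Rw]]
      proof eventually_elim
        case (elim n)
        have "norm (T_fun n w v) \<le> norm (G n) + norm (S_fun n w v)" unfolding TG by (rule norm_triangle_ineq4)
        thus ?case using elim by (simp add: algebra_simps)
      qed
      thus ?thesis by (rule bnd_intro)
    qed
  qed
  show ?thesis using P1 P2 by blast
qed

end
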